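(* Let $\mathscr{F}(r)=\int_0^1 t^{r-1/2}\sqrt{1+t}\,\arcsin t\,\mathrm{d}t$ for nonnegative integers $r$. Then for every nonnegative integer $r$, $$\mathscr{F}(r)=\frac{(-1)^r}{4^r}\frac{\binom{2r}{r}}{r+1}\left(\mathscr{F}(0)+\frac{1}{2}\sum_{k=1}^r\frac{(-1)^k4^k}{\binom{2k}{k}}\,\omega_k\right),$$ where $\omega_k=2\sqrt{2}\pi-2B(k+3/2,1/2)-2B(k+1/2,1/2)$.
   Context: $B(u,v)=\int_0^1 t^{u-1}(1-t)^{v-1}\,\mathrm{d}t$ denotes the Beta function. *)

theory Defs
  imports "HOL-Analysis.Analysis"
begin

definition scrF :: "nat \<Rightarrow> real" where
  "scrF r = integral {0..1} (\<lambda>t. t powr (real r - 1/2) * sqrt (1 + t) * arcsin t)"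

definition omega :: "nat \<Rightarrow> real" where
  "omega k = 2 * sqrt 2 * pi - 2 * Beta (real k + 3/2) (1/2) - 2 * Beta (real k + 1/2) (1/2)"

end

theory Submission
  imports Defs
begin

definition fI :: "nat \<Rightarrow> real \<Rightarrow> real" where
  "fI r t = t powr (real r - 1/2) * sqrt (1 + t) * arcsin t"

lemma rec_integral:
  fixes n :: nat
  shows "2 * (real n + 2) * scrF (Suc n) + (2 * real n + 1) * scrF n = omega (Suc n)"
proof -
  define a where "a = real n + 1/2"
  have a0: "a > 0" unfolding a_def by simp
  define P where "P t = 2 * t powr a * (1 + t) * sqrt (1 + t) * arcsin t" for t :: real
  define B1 where "B1 t = t powr (a + 1 - 1) * (1 - t) powr (1/2 - 1)" for t :: real
  define B2 where "B2 t = t powr (a + 2 - 1) * (1 - t) powr (1/2 - 1)" for t :: real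
  define A where "A t = (2 * real n + 1) * fI n t + 2 * (real n + 2) * fI (Suc n) t" for t
  define P' where "P' t = A t + 2 * (B1 t + B2 t)" for t
  have deriv: "(P has_vector_derivative P' t) (at t)" if t: "t \<in> {0<..<1}" for t
  proof -
    have t0: "t > 0" "t < 1" using t by auto
    have "(P has_real_derivative
       2 * (a * t powr (a - 1) * (1 + t) * sqrt (1 + t) * arcsin t
          + t powr a * sqrt (1 + t) * arcsin t
          + t powr a * (1 + t) * (inverse (sqrt (1 + t)) / 2) * arcsin t
          + t powr a * (1 + t) * sqrt (1 + t) * inverse (sqrt (1 - t\<^sup>2)))) (at t)"
      unfolding P_def
      using t0
      by (auto intro!: derivative_eq_intros has_real_derivative_powr DERIV_arcsin simp: algebra_simps)
    moreover have "2 * (a * t powr (a - 1) * (1 + t) * sqrt (1 + t) * arcsin t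
          + t powr a * sqrt (1 + t) * arcsin t
          + t powr a * (1 + t) * (inverse (sqrt (1 + t)) / 2) * arcsin t
          + t powr a * (1 + t) * sqrt (1 + t) * inverse (sqrt (1 - t\<^sup>2))) = P' t"
    proof -
      have e1: "t powr (a - 1) = t powr a / t" using t0 by (simp add: powr_diff)
      have e2: "t powr (real n - 1/2) = t powr a / t"
      proof -
        have "real n - 1/2 = a - 1" unfolding a_def by simp
        then show ?thesis using e1 by simp
      qed
      have e3: "t powr (real (Suc n) - 1/2) = t powr a" unfolding a_def by (simp add: algebra_simps)
      have e4: "t powr (a + 1 - 1) = t powr a" by simp
      have e5: "t powr (a + 2 - 1) = t powr a * t" using t0 by (simp add: powr_add)
      have e6: "(1 - t) powr (1/2 - 1) = 1 / sqrt (1 - t)" using t0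
        by (simp add: powr_minus_divide powr_half_sqrt)
      have e7: "sqrt (1 - t\<^sup>2) = sqrt (1 - t) * sqrt (1 + t)"
        by (simp add: real_sqrt_mult[symmetric] power2_eq_square algebra_simps)
      have s1: "sqrt (1 + t) > 0" "sqrt (1 - t) > 0" using t0 by auto
      have ss: "sqrt (1 + t) * sqrt (1 + t) = 1 + t" "sqrt (1 - t) * sqrt (1 - t) = 1 - t"
        using t0 by auto
      show ?thesis
        unfolding P'_def A_def B1_def B2_def fI_def e1 e2 e3 e4 e5 e6 e7
        using t0 s1 ss unfolding a_def
        apply (simp add: field_simps) using ss by algebra
    qed
    ultimately show ?thesis
      by (simp add: has_real_derivative_iff_has_vector_derivative)
  qed
  have contP: "continuous_on {0..1} P"
    unfolding P_def using a0
    by (intro continuous_intros continuous_on_powr') auto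
  have ftc: "(P' has_integral (P 1 - P 0)) {0..1}"
    by (rule fundamental_theorem_of_calculus_interior_strong[of "{}"]) (use deriv contP in auto)
  have P1: "P 1 - P 0 = 2 * sqrt 2 * pi"
    unfolding P_def using a0 by simp
  have hB1: "(B1 has_integral Beta (real n + 3/2) (1/2)) {0..1}"
    unfolding B1_def using has_integral_Beta_real[of "a+1" "1/2"] a0 unfolding a_def
    by (simp add: algebra_simps)
  have hB2: "(B2 has_integral Beta (real (Suc n) + 3/2) (1/2)) {0..1}"
    unfolding B2_def using has_integral_Beta_real[of "a+2" "1/2"] a0 unfolding a_def
    by (simp add: algebra_simps)
  have hA: "(A has_integral omega (Suc n)) {0..1}"
  proof -
    have "((\<lambda>t. P' t - 2 * (B1 t + B2 t)) has_integral
           (2 * sqrt 2 * pi - 2 * (Beta (real n + 3/2) (1/2) + Beta (real (Suc n) + 3/2) (1/2)))) {0..1}"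
      using has_integral_diff[OF ftc has_integral_mult_right[OF has_integral_add[OF hB1 hB2], of 2]] P1
      by simp
    moreover have "omega (Suc n) = 2 * sqrt 2 * pi - 2 * (Beta (real n + 3/2) (1/2) + Beta (real (Suc n) + 3/2) (1/2))"
      unfolding omega_def by (simp add: algebra_simps)
    ultimately show ?thesis unfolding P'_def by simp
  qed
  have contF: "continuous_on {0..1} (fI (Suc n))"
    unfolding fI_def by (intro continuous_intros continuous_on_powr') auto
  have hF1: "(fI (Suc n) has_integral scrF (Suc n)) {0..1}"
    unfolding scrF_def fI_def[symmetric]
    using integrable_continuous_real[OF contF] by (simp add: has_integral_integral)
  have "((\<lambda>t. (A t - 2 * (real n + 2) * fI (Suc n) t) / (2 * real n + 1)) has_integral
        (omega (Suc n) - 2 * (real n + 2) * scrF (Suc n)) / (2 * real n + 1)) {0..1}"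
    using has_integral_divide[OF has_integral_diff[OF hA has_integral_mult_right[OF hF1]]] by simp
  moreover have "(\<lambda>t. (A t - 2 * (real n + 2) * fI (Suc n) t) / (2 * real n + 1)) = fI n"
    unfolding A_def by (auto simp: field_simps)
  ultimately have "(fI n has_integral (omega (Suc n) - 2 * (real n + 2) * scrF (Suc n)) / (2 * real n + 1)) {0..1}"
    by simp
  then have "scrF n = (omega (Suc n) - 2 * (real n + 2) * scrF (Suc n)) / (2 * real n + 1)"
    unfolding scrF_def fI_def[symmetric] by (rule integral_unique)
  then show ?thesis by (simp add: field_simps)
qed

lemma central_binom_Suc:
  "real ((2 * Suc r) choose Suc r) * (real r + 1) = 2 * (2 * real r + 1) * real ((2 * r) choose r)"
proof -
  define X where "X = (Suc (Suc (2*r)) choose Suc r)"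
  define Y where "Y = (Suc (2*r) choose r)"
  define Z where "Z = ((2*r) choose r)"
  have h1: "Suc (Suc (2*r)) * Y = X * Suc r"
    unfolding X_def Y_def by (rule Suc_times_binomial_eq)
  have h3: "(Suc (2*r) choose Suc r) = Y"
    using binomial_symmetric[of r "Suc (2*r)"] unfolding Y_def by simp
  have h2: "Suc (2*r) * Z = Y * Suc r"
    unfolding Z_def using Suc_times_binomial_eq[of "2*r" r] h3 by simp
  have r1: "real (Suc (Suc (2*r))) * real Y = real X * real (Suc r)"
    using arg_cong[OF h1, of real] by (simp only: of_nat_mult)
  have r2: "real (Suc (2*r)) * real Z = real Y * real (Suc r)"
    using arg_cong[OF h2, of real] by (simp only: of_nat_mult)
  have "real X * (real r + 1) * (real r + 1) = (real (Suc (Suc (2*r))) * real Y) * (real r + 1)"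
    using r1 by simp
  also have "\<dots> = (2 * real r + 2) * (real Y * real (Suc r))" by (simp add: algebra_simps)
  also have "\<dots> = (2 * real r + 2) * (real (Suc (2*r)) * real Z)" using r2 by simp
  also have "\<dots> = (2 * (2 * real r + 1) * real Z) * (real r + 1)" by (simp add: algebra_simps)
  finally have "real X * (real r + 1) * (real r + 1) = (2 * (2 * real r + 1) * real Z) * (real r + 1)" .
  then have "real X * (real r + 1) = 2 * (2 * real r + 1) * real Z"
    by (subst (asm) mult_right_cancel) auto
  moreover have "X = (2 * Suc r) choose Suc r" unfolding X_def by simp
  ultimately show ?thesis unfolding Z_def by simp
qed

lemma aux_alg:
  fixes q D u sg F T w :: real
  assumes "q > 0" "D > 0" "u > 0"
  shows "- sg / (4 * q) * (D / u) * (F + 1/2 * (T + (- sg) * (4 * q) / D * w))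
      = - (sg * D * (F + 1/2 * T) / (2 * q)) / (2 * u) + (sg * sg) * w / (2 * u)"
  using assms by (simp add: field_simps)

theorem proposition6p0p1:
  fixes r :: nat
  shows "scrF r = (-1) ^ r / 4 ^ r * (real ((2*r) choose r) / (real r + 1)) *
           (scrF 0 + 1/2 * (\<Sum>k=1..r. (-1) ^ k * 4 ^ k / real ((2*k) choose k) * omega k))"
proof (induction r)
  case 0
  then show ?case by simp
next
  case (Suc r)
  define C where "C = real ((2*r) choose r)"
  define T where "T = (\<Sum>k=1..r. (-1) ^ k * 4 ^ k / real ((2*k) choose k) * omega k)"
  define sg :: real where "sg = (-1) ^ r"
  define q :: real where "q = 4 ^ r"
  define w where "w = omega (Suc r)"
  have sg2: "sg = 1 \<or> sg = -1" unfolding sg_def by (metis neg_one_even_power neg_one_odd_power)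
  have qpos: "q > 0" unfolding q_def by simp
  have Cpos: "C > 0" unfolding C_def by simp
  define D where "D = real ((2 * Suc r) choose Suc r)"
  have Dpos: "D > 0" unfolding D_def by (simp del: binomial_Suc_Suc)
  have C1: "C = D * (real r + 1) / (2 * (2 * real r + 1))"
    using central_binom_Suc[of r] unfolding C_def D_def by (simp add: field_simps)
  have IH: "scrF r = sg / q * (C / (real r + 1)) * (scrF 0 + 1/2 * T)"
    using Suc.IH unfolding C_def T_def sg_def q_def .
  have rec: "scrF (Suc r) = (w - (2 * real r + 1) * scrF r) / (2 * (real r + 2))"
    using rec_integral[of r] unfolding w_def by (simp add: field_simps)
  have sum: "(\<Sum>k=1..Suc r. (-1) ^ k * 4 ^ k / real ((2*k) choose k) * omega k)
     = T + (- sg) * (4 * q) / real ((2 * Suc r) choose Suc r) * w"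
    unfolding T_def sg_def q_def w_def by simp
  have p1: "(-1) ^ Suc r / 4 ^ Suc r = - sg / (4 * q)" unfolding sg_def q_def by simp
  have k: "(2 * real r + 1) * scrF r = sg * D * (scrF 0 + 1/2 * T) / (2 * q)"
  proof -
    have c: "C / (real r + 1) = D / (2 * (2 * real r + 1))"
    proof -
      have g: "\<And>y z. y > 0 \<Longrightarrow> D * y / z / y = D / z" by simp
      show ?thesis unfolding C1 by (rule g) simp
    qed
    have gen: "\<And>a X. (2 * real r + 1) * (a * (D / (2 * (2 * real r + 1))) * X) = a * D * X / 2"
      by (simp add: field_simps)
    have "(2 * real r + 1) * scrF r = sg / q * D * (scrF 0 + 1/2 * T) / 2"
      unfolding IH c gen ..
    also have "\<dots> = sg * D * (scrF 0 + 1/2 * T) / (2 * q)"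
      using qpos by simp
    finally show ?thesis .
  qed
  have sgsq: "sg * sg = 1" using sg2 by auto
  have "- sg / (4 * q) * (D / (real (Suc r) + 1)) * (scrF 0 + 1/2 * (T + (- sg) * (4 * q) / D * w))
      = - (sg * D * (scrF 0 + 1/2 * T) / (2 * q)) / (2 * (real r + 2)) + (sg * sg) * w / (2 * (real r + 2))"
    using aux_alg[OF qpos Dpos, of "real r + 2"] by (simp add: add.commute)
  also have "\<dots> = scrF (Suc r)"
    unfolding rec k[symmetric] sgsq by (simp add: diff_divide_distrib)
  finally show ?case
    unfolding sum p1 D_def by simp
qed

end
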